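(* Let $H_1$ and $H_2$ be graphs. If $\operatorname{obs}^\ast(H_1)\cap\operatorname{obs}^\ast(H_2)\ne\varnothing$ (up to isomorphism), then $H_1\cong H_2$.
   Context: All graphs are finite, simple and loopless. A full-homomorphism $\varphi\colon G\to H$ is a map $V(G)\to V(H)$ such that for all $x,y\in V(G)$, $xy\in E(G)$ if and only if $\varphi(x)\varphi(y)\in E(H)$. A full $H$-colouring of $G$ is a full-homomorphism $G\to H$. A minimal $H$-obstruction is a graph $G$ that admits no full $H$-colouring while every proper induced subgraph of $G$ admits one; $\operatorname{obs}(H)$ denotes the set of minimal $H$-obstructions (up to isomorphism), and $\operatorname{obs}^\ast(H)$ the set of minimal $H$-obstructions on exactly $|V(H)|+1$ vertices. *)

theory Defs
  imports Main
begin

definition graph :: "'a set \<Rightarrow> ('a \<Rightarrow> 'a \<Rightarrow> bool) \<Rightarrow> bool" where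
  "graph V E \<longleftrightarrow> finite V \<and> (\<forall>x y. E x y \<longrightarrow> x \<in> V \<and> y \<in> V)
     \<and> (\<forall>x y. E x y \<longrightarrow> E y x) \<and> (\<forall>x. \<not> E x x)"

definition full_hom :: "'a set \<Rightarrow> ('a \<Rightarrow> 'a \<Rightarrow> bool) \<Rightarrow> 'b set \<Rightarrow> ('b \<Rightarrow> 'b \<Rightarrow> bool) \<Rightarrow> ('a \<Rightarrow> 'b) \<Rightarrow> bool" where
  "full_hom V E W F f \<longleftrightarrow> (\<forall>x\<in>V. f x \<in> W) \<and> (\<forall>x\<in>V. \<forall>y\<in>V. E x y \<longleftrightarrow> F (f x) (f y))"

definition full_colourable :: "'a set \<Rightarrow> ('a \<Rightarrow> 'a \<Rightarrow> bool) \<Rightarrow> 'b set \<Rightarrow> ('b \<Rightarrow> 'b \<Rightarrow> bool) \<Rightarrow> bool" where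
  "full_colourable V E W F \<longleftrightarrow> (\<exists>f. full_hom V E W F f)"

definition induced :: "('a \<Rightarrow> 'a \<Rightarrow> bool) \<Rightarrow> 'a set \<Rightarrow> 'a \<Rightarrow> 'a \<Rightarrow> bool" where
  "induced E S = (\<lambda>x y. E x y \<and> x \<in> S \<and> y \<in> S)"

definition min_obs :: "'b set \<Rightarrow> ('b \<Rightarrow> 'b \<Rightarrow> bool) \<Rightarrow> 'a set \<Rightarrow> ('a \<Rightarrow> 'a \<Rightarrow> bool) \<Rightarrow> bool" where
  "min_obs W F V E \<longleftrightarrow> graph V E \<and> \<not> full_colourable V E W F
     \<and> (\<forall>S. S \<subset> V \<longrightarrow> full_colourable S (induced E S) W F)"

definition min_obs_star :: "'b set \<Rightarrow> ('b \<Rightarrow> 'b \<Rightarrow> bool) \<Rightarrow> 'a set \<Rightarrow> ('a \<Rightarrow> 'a \<Rightarrow> bool) \<Rightarrow> bool" where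
  "min_obs_star W F V E \<longleftrightarrow> min_obs W F V E \<and> card V = card W + 1"

definition graph_iso :: "'a set \<Rightarrow> ('a \<Rightarrow> 'a \<Rightarrow> bool) \<Rightarrow> 'b set \<Rightarrow> ('b \<Rightarrow> 'b \<Rightarrow> bool) \<Rightarrow> ('a \<Rightarrow> 'b) \<Rightarrow> bool" where
  "graph_iso V E W F f \<longleftrightarrow> bij_betw f V W \<and> (\<forall>x\<in>V. \<forall>y\<in>V. E x y \<longleftrightarrow> F (f x) (f y))"

end

theory Submission
  imports Defs
begin

definition twinfree :: "('a \<Rightarrow> 'a \<Rightarrow> bool) \<Rightarrow> 'a set \<Rightarrow> bool" where
  "twinfree D S \<longleftrightarrow> (\<forall>a\<in>S. \<forall>b\<in>S. a \<noteq> b \<longrightarrow> (\<exists>z\<in>S. D a z \<noteq> D b z))"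

lemma min_obs_twinfree:
  assumes "min_obs W F U D"
  shows "twinfree D U"
  unfolding twinfree_def
proof (intro ballI impI, rule ccontr)
  fix a b assume ab: "a \<in> U" "b \<in> U" "a \<noteq> b" and nz: "\<not> (\<exists>z\<in>U. D a z \<noteq> D b z)"
  have g: "graph U D" and nc: "\<not> full_colourable U D W F"
    and sub: "\<forall>S. S \<subset> U \<longrightarrow> full_colourable S (induced D S) W F"
    using assms unfolding min_obs_def by blast+
  have sym: "\<And>x y. D x y = D y x" using g unfolding graph_def by blast
  let ?S = "U - {b}"
  have "?S \<subset> U" using ab by auto
  then obtain f where f: "full_hom ?S (induced D ?S) W F f"
    using sub unfolding full_colourable_def by blast
  define h where "h x = (if x = b then a else x)" for x
  have hS: "\<And>x. x \<in> U \<Longrightarrow> h x \<in> ?S" using ab by (auto simp: h_def)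
  have hD: "\<And>x y. x \<in> U \<Longrightarrow> y \<in> U \<Longrightarrow> D x y = D (h x) (h y)"
  proof -
    fix x y assume xy: "x \<in> U" "y \<in> U"
    have 1: "\<And>y. y \<in> U \<Longrightarrow> D b y = D a y" using nz by auto
    have 2: "\<And>x. x \<in> U \<Longrightarrow> D x b = D x a"
    proof -
      fix x assume "x \<in> U"
      have "D x b = D b x" by (rule sym)
      also have "\<dots> = D a x" using 1 \<open>x \<in> U\<close> by blast
      also have "\<dots> = D x a" by (rule sym)
      finally show "D x b = D x a" .
    qed
    show "D x y = D (h x) (h y)"
    proof (cases "x = b")
      case True
      then show ?thesis using 1 2 xy ab by (cases "y = b") (simp_all add: h_def)
    next
      case False
      then show ?thesis using 1 2 xy ab by (cases "y = b") (simp_all add: h_def)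
    qed
  qed
  have "full_hom U D W F (f \<circ> h)"
    unfolding full_hom_def
  proof (intro conjI ballI)
    fix x assume "x \<in> U" then show "(f \<circ> h) x \<in> W" using f hS unfolding full_hom_def by auto
  next
    fix x y assume xy: "x \<in> U" "y \<in> U"
    have "D x y = D (h x) (h y)" using hD xy .
    also have "\<dots> = induced D ?S (h x) (h y)" using hS xy unfolding induced_def by auto
    also have "\<dots> = F (f (h x)) (f (h y))" using f hS xy unfolding full_hom_def by auto
    finally show "D x y = F ((f \<circ> h) x) ((f \<circ> h) y)" by simp
  qed
  then show False using nc unfolding full_colourable_def by blast
qed

lemma sumner:
  assumes fin: "finite U" and ne: "U \<noteq> {}" and tf: "twinfree D U"
  shows "\<exists>v\<in>U. twinfree D (U - {v})"
proof (rule ccontr)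
  assume "\<not> ?thesis"
  then have H: "\<forall>v\<in>U. \<exists>a\<in>U-{v}. \<exists>b\<in>U-{v}. a \<noteq> b \<and> (\<forall>z\<in>U-{v}. D a z = D b z)"
    unfolding twinfree_def by blast
  have main: "S \<subseteq> U \<longrightarrow> (\<exists>c::'a \<Rightarrow> 'a. (\<forall>x\<in>U. \<forall>y\<in>U. c x = c y \<longrightarrow> (\<forall>z\<in>U-S. D x z = D y z))
      \<and> card (c ` U) + card S = card U)" if "finite S" for S
    using that
  proof (induction S rule: finite_induct)
    case empty
    show ?case by (rule impI, rule exI[of _ id]) auto
  next
    case (insert v S)
    show ?case
    proof
      assume sU: "insert v S \<subseteq> U"
      then obtain c :: "'a \<Rightarrow> 'a" where c1: "\<forall>x\<in>U. \<forall>y\<in>U. c x = c y \<longrightarrow> (\<forall>z\<in>U-S. D x z = D y z)"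
        and c2: "card (c ` U) + card S = card U" using insert.IH sU by blast
      have vU: "v \<in> U" using sU by auto
      obtain a b where ab: "a \<in> U" "b \<in> U" "a \<noteq> v" "b \<noteq> v" "a \<noteq> b"
        and agree: "\<forall>z\<in>U-{v}. D a z = D b z" using H vU by blast
      have dv: "D a v \<noteq> D b v"
      proof
        assume "D a v = D b v"
        then have "\<forall>z\<in>U. D a z = D b z" using agree by auto
        then show False using tf ab unfolding twinfree_def by blast
      qed
      have cab: "c a \<noteq> c b"
      proof
        assume "c a = c b"
        then have "D a v = D b v" using c1[rule_format, of a b v] ab vU insert(2) by simp
        then show False using dv by simp
      qed
      define c' where "c' x = (if c x = c b then c a else c x)" for x
      have img: "c' ` U = c ` U - {c b}"
      proof
        show "c' ` U \<subseteq> c ` U - {c b}" using ab cab by (auto simp: c'_def)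
      next
        show "c ` U - {c b} \<subseteq> c' ` U"
        proof
          fix y assume "y \<in> c ` U - {c b}"
          then obtain x where "x \<in> U" "y = c x" "c x \<noteq> c b" by auto
          then show "y \<in> c' ` U" by (auto simp: c'_def intro!: image_eqI[of _ _ x])
        qed
      qed
      have cardc: "card (c' ` U) + 1 = card (c ` U)"
      proof -
        have "c b \<in> c ` U" using ab by blast
        then have "Suc (card (c ` U - {c b})) = card (c ` U)"
          using fin by (intro card_Suc_Diff1) auto
        then show ?thesis using img by simp
      qed
      have inv: "\<forall>x\<in>U. \<forall>y\<in>U. c' x = c' y \<longrightarrow> (\<forall>z\<in>U-insert v S. D x z = D y z)"
      proof (intro ballI impI)
        fix x y z assume xy: "x \<in> U" "y \<in> U" "c' x = c' y" and z: "z \<in> U - insert v S"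
        have zS: "z \<in> U - S" and zv: "z \<in> U - {v}" using z by auto
        have Dab: "D a z = D b z" using agree zv by auto
        show "D x z = D y z"
        proof (cases "c x = c b")
          case True
          note xT = True
          show ?thesis
          proof (cases "c y = c b")
            case True then have "c x = c y" using xT by simp
            then show ?thesis using c1 xy zS by blast
          next
            case False
            then have "c y = c a" using xy xT by (simp add: c'_def)
            then have "D y z = D a z" using c1[rule_format, of y a z] xy ab zS by simp
            moreover have "D x z = D b z" using c1[rule_format, of x b z] xy ab zS xT by simp
            ultimately show ?thesis using Dab by simp
          qed
        next
          case False
          note xF = False
          show ?thesis
          proof (cases "c y = c b")
            case True
            then have "c x = c a" using xy xF by (simp add: c'_def)
            then have "D x z = D a z" using c1[rule_format, of x a z] xy ab zS by simp
            moreover have "D y z = D b z" using c1[rule_format, of y b z] xy ab zS True by simp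
            ultimately show ?thesis using Dab by simp
          next
            case False
            then have "c x = c y" using xy xF by (simp add: c'_def)
            then show ?thesis using c1 xy zS by blast
          qed
        qed
      qed
      show "\<exists>c::'a \<Rightarrow> 'a. (\<forall>x\<in>U. \<forall>y\<in>U. c x = c y \<longrightarrow> (\<forall>z\<in>U-insert v S. D x z = D y z))
          \<and> card (c ` U) + card (insert v S) = card U"
      proof (intro exI[of _ c'] conjI)
        show "card (c' ` U) + card (insert v S) = card U"
          using cardc c2 insert(1,2) by simp
      qed (rule inv)
    qed
  qed
  have ex: "\<exists>c::'a \<Rightarrow> 'a. (\<forall>x\<in>U. \<forall>y\<in>U. c x = c y \<longrightarrow> (\<forall>z\<in>U-U. D x z = D y z))
      \<and> card (c ` U) + card U = card U"
    using main[OF fin] by (simp only: subset_refl simp_thms)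
  then obtain c :: "'a \<Rightarrow> 'a" where c: "(\<forall>x\<in>U. \<forall>y\<in>U. c x = c y \<longrightarrow> (\<forall>z\<in>U-U. D x z = D y z))
      \<and> card (c ` U) + card U = card U" by (rule exE)
  then have "card (c ` U) + card U = card U" by (rule conjunct2)
  then have "card (c ` U) = 0" by simp
  then have "c ` U = {}" using fin by simp
  then show False using ne by simp
qed

lemma twinfree_bij:
  assumes tf: "twinfree D S" and fS: "finite S" and fW: "finite W"
    and into: "\<forall>x\<in>S. f x \<in> W" and edge: "\<forall>x\<in>S. \<forall>y\<in>S. D x y \<longleftrightarrow> F (f x) (f y)"
    and cd: "card S = card W"
  shows "bij_betw f S W"
proof -
  have inj: "inj_on f S"
  proof (rule inj_onI, rule ccontr)
    fix a b assume ab: "a \<in> S" "b \<in> S" "f a = f b" "a \<noteq> b"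
    then obtain z where z: "z \<in> S" "D a z \<noteq> D b z" using tf unfolding twinfree_def by blast
    have "D a z = F (f a) (f z)" using edge ab z by blast
    also have "\<dots> = F (f b) (f z)" using ab by simp
    also have "\<dots> = D b z" using edge ab z by blast
    finally show False using z by simp
  qed
  have sub: "f ` S \<subseteq> W" using into by blast
  have "card (f ` S) = card W" using card_image[OF inj] cd by simp
  then have "f ` S = W" using card_subset_eq[OF fW sub] by simp
  then show ?thesis using inj unfolding bij_betw_def by simp
qed

theorem corollary3p6:
  fixes V1 :: "'a set" and E1 :: "'a \<Rightarrow> 'a \<Rightarrow> bool"
    and V2 :: "'b set" and E2 :: "'b \<Rightarrow> 'b \<Rightarrow> bool"
    and U1 :: "'c set" and D1 :: "'c \<Rightarrow> 'c \<Rightarrow> bool"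
    and U2 :: "'d set" and D2 :: "'d \<Rightarrow> 'd \<Rightarrow> bool"
    and g :: "'c \<Rightarrow> 'd"
  assumes "graph V1 E1" and "graph V2 E2"
    and "min_obs_star V1 E1 U1 D1" and "min_obs_star V2 E2 U2 D2"
    and "graph_iso U1 D1 U2 D2 g"
  shows "\<exists>f. graph_iso V1 E1 V2 E2 f"
proof -
  have mo1: "min_obs V1 E1 U1 D1" and c1: "card U1 = card V1 + 1"
    using assms(3) unfolding min_obs_star_def by blast+
  have mo2: "min_obs V2 E2 U2 D2" and c2: "card U2 = card V2 + 1"
    using assms(4) unfolding min_obs_star_def by blast+
  have fU1: "finite U1" using mo1 unfolding min_obs_def graph_def by blast
  have fV1: "finite V1" using assms(1) unfolding graph_def by blast
  have fV2: "finite V2" using assms(2) unfolding graph_def by blast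
  have ne: "U1 \<noteq> {}" using c1 by auto
  have gb: "bij_betw g U1 U2" and ge: "\<forall>x\<in>U1. \<forall>y\<in>U1. D1 x y \<longleftrightarrow> D2 (g x) (g y)"
    using assms(5) unfolding graph_iso_def by blast+
  have sub1: "\<forall>S. S \<subset> U1 \<longrightarrow> full_colourable S (induced D1 S) V1 E1"
    using mo1 unfolding min_obs_def by blast
  have sub2: "\<forall>S. S \<subset> U2 \<longrightarrow> full_colourable S (induced D2 S) V2 E2"
    using mo2 unfolding min_obs_def by blast
  obtain v where vU: "v \<in> U1" and tfv: "twinfree D1 (U1 - {v})"
    using sumner[OF fU1 ne min_obs_twinfree[OF mo1]] by blast
  define S where "S = U1 - {v}"
  have fS: "finite S" using fU1 S_def by simp
  have cS: "card S = card V1" using c1 vU fU1 S_def by simp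
  have cU2: "card U2 = card U1" using bij_betw_same_card[OF gb] by simp
  have cS2: "card S = card V2" using cS c1 c2 cU2 by simp
  have "S \<subset> U1" using vU S_def by auto
  then obtain f1 where f1: "full_hom S (induced D1 S) V1 E1 f1"
    using sub1 unfolding full_colourable_def by blast
  have f1i: "\<forall>x\<in>S. f1 x \<in> V1" using f1 unfolding full_hom_def by blast
  have f1e: "\<forall>x\<in>S. \<forall>y\<in>S. D1 x y \<longleftrightarrow> E1 (f1 x) (f1 y)"
    using f1 unfolding full_hom_def induced_def by blast
  define T where "T = U2 - {g v}"
  have gvU: "g v \<in> U2" using gb vU bij_betwE by blast
  have "T \<subset> U2" using gvU T_def by auto
  then obtain h2 where h2: "full_hom T (induced D2 T) V2 E2 h2"
    using sub2 unfolding full_colourable_def by blast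
  have gST: "\<forall>x\<in>S. g x \<in> T"
  proof
    fix x assume x: "x \<in> S"
    then have "x \<in> U1" "x \<noteq> v" using S_def by auto
    then have "g x \<in> U2" "g x \<noteq> g v"
      using gb vU bij_betwE bij_betw_imp_inj_on inj_onD by metis+
    then show "g x \<in> T" using T_def by simp
  qed
  define f2 where "f2 = h2 \<circ> g"
  have f2i: "\<forall>x\<in>S. f2 x \<in> V2" using h2 gST unfolding full_hom_def f2_def by auto
  have f2e: "\<forall>x\<in>S. \<forall>y\<in>S. D1 x y \<longleftrightarrow> E2 (f2 x) (f2 y)"
  proof (intro ballI)
    fix x y assume xy: "x \<in> S" "y \<in> S"
    have "D1 x y = D2 (g x) (g y)" using ge xy S_def by auto
    also have "\<dots> = induced D2 T (g x) (g y)" using gST xy unfolding induced_def by auto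
    also have "\<dots> = E2 (f2 x) (f2 y)" using h2 gST xy unfolding full_hom_def f2_def by auto
    finally show "D1 x y = E2 (f2 x) (f2 y)" .
  qed
  have tfS: "twinfree D1 S" using tfv S_def by simp
  have b1: "bij_betw f1 S V1" by (rule twinfree_bij[OF tfS fS fV1 f1i f1e cS])
  have b2: "bij_betw f2 S V2" by (rule twinfree_bij[OF tfS fS fV2 f2i f2e cS2])
  define F where "F = f2 \<circ> inv_into S f1"
  have bi: "bij_betw (inv_into S f1) V1 S" using bij_betw_inv_into[OF b1] .
  have "bij_betw F V1 V2" unfolding F_def using bij_betw_trans[OF bi b2] .
  moreover have "\<forall>x\<in>V1. \<forall>y\<in>V1. E1 x y \<longleftrightarrow> E2 (F x) (F y)"
  proof (intro ballI)
    fix x y assume xy: "x \<in> V1" "y \<in> V1"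
    have xS: "inv_into S f1 x \<in> S" and yS: "inv_into S f1 y \<in> S"
      using bi xy bij_betwE by blast+
    have fx: "f1 (inv_into S f1 x) = x" and fy: "f1 (inv_into S f1 y) = y"
      using b1 xy by (simp_all add: bij_betw_inv_into_right)
    have "E1 x y = D1 (inv_into S f1 x) (inv_into S f1 y)"
      using f1e xS yS fx fy by metis
    also have "\<dots> = E2 (F x) (F y)" using f2e xS yS unfolding F_def by simp
    finally show "E1 x y = E2 (F x) (F y)" .
  qed
  ultimately show ?thesis unfolding graph_iso_def by blast
qed

end
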